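(* Let $h>0$, let $B\subset\mathbb Z^8_h$ be bounded and let $f:\partial B\to\mathbb O$. Then $$C^h_{\partial B}f(y)=\tfrac12\big(f(y)+S^h_{\partial B}f(y)\big)\ \text{ for all } y\in\partial^+B,\qquad C^h_{\partial B}f(y)=\tfrac12\big(-f(y)+S^h_{\partial B}f(y)\big)\ \text{ for all } y\in\partial^-B.$$
   Context: $\mathbb O$ is the real octonion algebra with basis $\mathbf e_0=1,\mathbf e_1,\dots,\mathbf e_7$, where $\mathbf e_i\mathbf e_j=-\delta_{ij}+\sum_k\varepsilon_{ijk}\mathbf e_k$ for $1\le i,j\le 7$, $\varepsilon_{ijk}$ totally antisymmetric with $\varepsilon_{ijk}=1$ for $ijk\in\{123,145,176,246,257,347,365\}$; $\overline{\mathbf e}_0=\mathbf e_0$, $\overline{\mathbf e}_l=-\mathbf e_l$ ($l\ge1$). For $h>0$, $\mathbb Z^8_h=(h\mathbb Z)^8$, $e_0,\dots,e_7$ are the standard unit vectors of $\mathbb R^8$, $\chi_A$ is the indicator of $A$. $\partial_l^{+,h}f(x)=(f(x+he_l)-f(x))/h$, $\partial_l^{-,h}f(x)=(f(x)-f(x-he_l))/h$. $N(x)=\{x,x\pm he_0,\dots,x\pm he_7\}$; $\partial B=\{x:\ N(x)\cap B\neq\emptyset,\ N(x)\cap(\mathbb Z^8_h\setminus B)\neq\emptyset\}$, $\partial^+B=\partial B\cap B$, $\partial^-B=\partial B\setminus B$. For $x\in\partial B$: $\Sigma(x)=\sum_l[(\partial_l^{+,h}\chi_B(x))^2+(\partial_l^{-,h}\chi_B(x))^2]$,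 $s(x)=\frac{h^8}{2}\sqrt{\Sigma(x)}$, $n_l^\pm(x)=-2\partial_l^{\pm,h}\chi_B(x)/\sqrt{\Sigma(x)}$, $\int_{\partial B}g\,dS=\sum_{x\in\partial B}g(x)s(x)$. Fundamental solution: $E^1(x)=\frac{1}{(2\pi)^8}\int_{[-\pi,\pi]^8}\frac{\sum_l\overline{\mathbf e}_l\sin u_l}{\sum_l\sin^2u_l}\sin(\sum_lu_lx_l)\,du$ ($x\in\mathbb Z^8$), $E^h(x)=h^{-7}E^1(x/h)$. Star product: $K^h(x,y)*g(x)=-\frac12\sum_{l=0}^7\big(E^h(he_l-x+y)n_l^-(x)+E^h(-he_l-x+y)n_l^+(x)\big)(\mathbf e_lg(x))$. Operators on $g:\partial B\to\mathbb O$: $C^h_{\partial B}g(y)=\int_{\partial B}K^h(x,y)*g(x)\,dS(x)$ ($y\in\mathbb Z^8_h$), and $S^h_{\partial B}g(y)=2\int_{\partial B}K^h(x,y)*\big(g(x)-g(y)\big)\,dS(x)+g(y)$ ($y\in\partial B$), where in the latter the star product is applied to the function $x\mapsto g(x)-g(y)$. *)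

theory Defs
  imports "HOL-Analysis.Analysis"
begin

text \<open>Octonions are represented as vectors in real^8; component k (k < 8) is the
coefficient of the basis element e_k.\<close>

type_synonym oct = "real ^ 8"

definition ev :: "nat \<Rightarrow> real ^ 8" where
  "ev k = axis (of_nat k :: 8) 1"

definition comp :: "real ^ 8 \<Rightarrow> nat \<Rightarrow> real" where
  "comp x k = x $ (of_nat k :: 8)"

definition oct_triples :: "(nat \<times> nat \<times> nat) list" where
  "oct_triples = [(1,2,3),(1,4,5),(1,7,6),(2,4,6),(2,5,7),(3,4,7),(3,6,5)]"

definition oct_cyc :: "(nat \<times> nat \<times> nat) set" where
  "oct_cyc = (\<Union>(a,b,c)\<in>set oct_triples. {(a,b,c),(b,c,a),(c,a,b)})"

definition oct_eps :: "nat \<Rightarrow> nat \<Rightarrow> nat \<Rightarrow> real" where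
  "oct_eps i j k = (if (i,j,k) \<in> oct_cyc then 1 else if (j,i,k) \<in> oct_cyc then -1 else 0)"

definition ebasis_mult :: "nat \<Rightarrow> nat \<Rightarrow> oct" where
  "ebasis_mult i j =
     (if i = 0 then ev j
      else if j = 0 then ev i
      else if i = j then - ev 0
      else (\<Sum>k\<in>{1..7}. oct_eps i j k *\<^sub>R ev k))"

definition omult :: "oct \<Rightarrow> oct \<Rightarrow> oct" where
  "omult a b = (\<Sum>i<8. \<Sum>j<8. (comp a i * comp b j) *\<^sub>R ebasis_mult i j)"

definition oconj_basis :: "nat \<Rightarrow> oct" where
  "oconj_basis l = (if l = 0 then ev 0 else - ev l)"

definition lattice :: "real \<Rightarrow> (real ^ 8) set" where
  "lattice h = {x. \<forall>i. \<exists>k::int. x $ i = h * of_int k}"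

definition nbhd :: "real \<Rightarrow> real ^ 8 \<Rightarrow> (real ^ 8) set" where
  "nbhd h x = insert x ((\<lambda>l. x + h *\<^sub>R ev l) ` {..<8} \<union> (\<lambda>l. x - h *\<^sub>R ev l) ` {..<8})"

definition bd :: "real \<Rightarrow> (real ^ 8) set \<Rightarrow> (real ^ 8) set" where
  "bd h B = {x \<in> lattice h. nbhd h x \<inter> B \<noteq> {} \<and> nbhd h x \<inter> (lattice h - B) \<noteq> {}}"

definition chi :: "(real ^ 8) set \<Rightarrow> real ^ 8 \<Rightarrow> real" where
  "chi B x = (if x \<in> B then 1 else 0)"

definition dplus :: "real \<Rightarrow> nat \<Rightarrow> (real ^ 8 \<Rightarrow> real) \<Rightarrow> real ^ 8 \<Rightarrow> real" where
  "dplus h l g x = (g (x + h *\<^sub>R ev l) - g x) / h"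

definition dminus :: "real \<Rightarrow> nat \<Rightarrow> (real ^ 8 \<Rightarrow> real) \<Rightarrow> real ^ 8 \<Rightarrow> real" where
  "dminus h l g x = (g x - g (x - h *\<^sub>R ev l)) / h"

definition Sig :: "real \<Rightarrow> (real ^ 8) set \<Rightarrow> real ^ 8 \<Rightarrow> real" where
  "Sig h B x = (\<Sum>l<8. (dplus h l (chi B) x)\<^sup>2 + (dminus h l (chi B) x)\<^sup>2)"

definition sfac :: "real \<Rightarrow> (real ^ 8) set \<Rightarrow> real ^ 8 \<Rightarrow> real" where
  "sfac h B x = h ^ 8 / 2 * sqrt (Sig h B x)"

definition nplus :: "real \<Rightarrow> (real ^ 8) set \<Rightarrow> nat \<Rightarrow> real ^ 8 \<Rightarrow> real" where
  "nplus h B l x = - 2 * dplus h l (chi B) x / sqrt (Sig h B x)"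

definition nminus :: "real \<Rightarrow> (real ^ 8) set \<Rightarrow> nat \<Rightarrow> real ^ 8 \<Rightarrow> real" where
  "nminus h B l x = - 2 * dminus h l (chi B) x / sqrt (Sig h B x)"

definition surf_int :: "real \<Rightarrow> (real ^ 8) set \<Rightarrow> (real ^ 8 \<Rightarrow> oct) \<Rightarrow> oct" where
  "surf_int h B g = (\<Sum>x\<in>bd h B. sfac h B x *\<^sub>R g x)"

definition E1 :: "real ^ 8 \<Rightarrow> oct" where
  "E1 x = (1 / (2 * pi) ^ 8) *\<^sub>R
     integral (cbox (\<chi> i. - pi) (\<chi> i. pi))
       (\<lambda>u. (sin (u \<bullet> x) / (\<Sum>l<8. (sin (comp u l))\<^sup>2)) *\<^sub>R
            (\<Sum>l<8. sin (comp u l) *\<^sub>R oconj_basis l))"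

definition Eh :: "real \<Rightarrow> real ^ 8 \<Rightarrow> oct" where
  "Eh h x = (1 / h ^ 7) *\<^sub>R E1 ((1 / h) *\<^sub>R x)"

definition star :: "real \<Rightarrow> (real ^ 8) set \<Rightarrow> real ^ 8 \<Rightarrow> (real ^ 8 \<Rightarrow> oct) \<Rightarrow> real ^ 8 \<Rightarrow> oct" where
  "star h B y g x = (- (1/2)) *\<^sub>R
     (\<Sum>l<8. omult (nminus h B l x *\<^sub>R Eh h (h *\<^sub>R ev l - x + y)
                    + nplus h B l x *\<^sub>R Eh h (- (h *\<^sub>R ev l) - x + y))
                   (omult (ev l) (g x)))"

definition Cop :: "real \<Rightarrow> (real ^ 8) set \<Rightarrow> (real ^ 8 \<Rightarrow> oct) \<Rightarrow> real ^ 8 \<Rightarrow> oct" where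
  "Cop h B g y = surf_int h B (star h B y g)"

definition Sop :: "real \<Rightarrow> (real ^ 8) set \<Rightarrow> (real ^ 8 \<Rightarrow> oct) \<Rightarrow> real ^ 8 \<Rightarrow> oct" where
  "Sop h B g y = 2 *\<^sub>R surf_int h B (star h B y (\<lambda>x. g x - g y)) + g y"

end

theory Submission
  imports Defs
begin


lemma of_nat8_eq_Abs: "(of_nat k :: 8) = Abs_bit0 (int k mod 8)"
  using bit0.of_nat_eq[where 'a=4] by simp

lemma of_nat8_inj: "a < 8 \<Longrightarrow> b < 8 \<Longrightarrow> ((of_nat a :: 8) = of_nat b) = (a = b)"
  by (simp add: of_nat8_eq_Abs bit0.Abs_bit0_inject)

lemma of_nat8_surj: "\<exists>l<8. (i::8) = of_nat l"
proof -
  obtain m where m: "i = Abs_bit0 m" "m \<in> {0..<8}"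
    using bit0.Abs_bit0_cases[where 'a=4, of i] by auto
  show ?thesis
    apply (rule exI[of _ "nat m"]) using m by (auto simp add: of_nat8_eq_Abs)
qed

lemma bij8: "bij_betw (\<lambda>l. of_nat l :: 8) {..<8} UNIV"
proof (rule bij_betwI')
  show "\<And>x y. x \<in> {..<8} \<Longrightarrow> y \<in> {..<8} \<Longrightarrow> ((of_nat x::8) = of_nat y) = (x = y)"
    by (simp add: of_nat8_inj)
  show "\<And>y. y \<in> (UNIV::8 set) \<Longrightarrow> \<exists>x\<in>{..<8}. y = of_nat x"
    using of_nat8_surj by auto
qed auto

lemma sum8: "(\<Sum>i\<in>(UNIV::8 set). f i) = (\<Sum>l<8. f (of_nat l))"
  using sum.reindex_bij_betw[OF bij8, of f] by simp


lemma ev_comp: "k < 8 \<Longrightarrow> l < 8 \<Longrightarrow> comp (ev l) k = (if k = l then 1 else 0)"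
  by (auto simp: comp_def ev_def axis_def of_nat8_inj)



definition ms :: "nat \<Rightarrow> nat \<Rightarrow> real" where "ms i j = [[1, 1, 1, 1, 1, 1, 1, 1], [1, -1, 1, -1, 1, -1, -1, 1], [1, -1, -1, 1, 1, 1, -1, -1], [1, 1, -1, -1, 1, -1, 1, -1], [1, -1, -1, -1, -1, 1, 1, 1], [1, 1, -1, 1, -1, -1, -1, 1], [1, 1, 1, -1, -1, 1, -1, -1], [1, -1, 1, 1, -1, -1, 1, -1]] ! i ! j"
definition mi :: "nat \<Rightarrow> nat \<Rightarrow> nat" where "mi i j = [[0, 1, 2, 3, 4, 5, 6, 7], [1, 0, 3, 2, 5, 4, 7, 6], [2, 3, 0, 1, 6, 7, 4, 5], [3, 2, 1, 0, 7, 6, 5, 4], [4, 5, 6, 7, 0, 1, 2, 3], [5, 4, 7, 6, 1, 0, 3, 2], [6, 7, 4, 5, 2, 3, 0, 1], [7, 6, 5, 4, 3, 2, 1, 0]] ! i ! j"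

lemma lt8_cases: "(i::nat) < 8 \<Longrightarrow> i = 0 \<or> i = 1 \<or> i = 2 \<or> i = 3 \<or> i = 4 \<or> i = 5 \<or> i = 6 \<or> i = 7"
  by auto

lemma set17: "{1..7::nat} = {1,2,3,4,5,6,7}" by auto
lemma sum17: "(\<Sum>k\<in>{1..7::nat}. f k) = f 1 + f 2 + f 3 + f 4 + f 5 + f 6 + f 7"
  unfolding set17 by (simp add: ac_simps)
lemma sum17': "(\<Sum>k\<in>{Suc 0..7::nat}. f k) = f 1 + f 2 + f 3 + f 4 + f 5 + f 6 + f 7"
  using sum17 by simp
lemma oct_cyc_eq: "oct_cyc = {(1,2,3),(2,3,1),(3,1,2),(1,4,5),(4,5,1),(5,1,4),(1,7,6),(7,6,1),(6,1,7),
  (2,4,6),(4,6,2),(6,2,4),(2,5,7),(5,7,2),(7,2,5),(3,4,7),(4,7,3),(7,3,4),(3,6,5),(6,5,3),(5,3,6)}"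
  by (simp add: oct_cyc_def oct_triples_def insert_commute)

lemma ebasis_tab: "i<8 \<Longrightarrow> j<8 \<Longrightarrow> ebasis_mult i j = ms i j *\<^sub>R ev (mi i j)"
  apply (drule lt8_cases)+
  apply (elim disjE)
  apply (simp_all add: ebasis_mult_def oct_eps_def oct_cyc_eq ms_def mi_def sum17 sum17')
  done

lemma tab_check: "k<8 \<Longrightarrow> l<8 \<Longrightarrow> j<8 \<Longrightarrow> mi l j < 8 \<and>
  (if k = l then mi k (mi k j) = j \<and> (if k = 0 then 1 else -1) * ms k j * ms k (mi k j) = (1::real)
   else mi k (mi l j) = mi l (mi k j) \<and>
     (if k = 0 then 1 else -1) * ms l j * ms k (mi l j) + (if l = 0 then 1 else -1) * ms k j * ms l (mi k j) = (0::real))"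
  apply (drule lt8_cases)+
  apply (elim disjE)
  apply (simp_all add: ms_def mi_def)
  done



lemma comp_add[simp]: "comp (a + b) k = comp a k + comp b k" by (simp add: comp_def)
lemma comp_diff[simp]: "comp (a - b) k = comp a k - comp b k" by (simp add: comp_def)
lemma comp_uminus[simp]: "comp (- a) k = - comp a k" by (simp add: comp_def)
lemma comp_scaleR[simp]: "comp (r *\<^sub>R a) k = r * comp a k" by (simp add: comp_def)
lemma comp_zero[simp]: "comp 0 k = 0" by (simp add: comp_def)

lemma omult_add_left: "omult (a + b) c = omult a c + omult b c"
  by (simp add: omult_def distrib_right scaleR_add_left sum.distrib)
lemma omult_add_right: "omult c (a + b) = omult c a + omult c b"
  by (simp add: omult_def distrib_left scaleR_add_left sum.distrib)
lemma omult_scaleR_left: "omult (r *\<^sub>R a) c = r *\<^sub>R omult a c"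
  by (simp add: omult_def scaleR_sum_right mult.assoc)
lemma omult_scaleR_right: "omult c (r *\<^sub>R a) = r *\<^sub>R omult c a"
  by (simp add: omult_def scaleR_sum_right mult.assoc mult.left_commute)

lemma linear_omult_left: "linear (\<lambda>a. omult a c)"
  by (rule linearI) (simp_all add: omult_add_left omult_scaleR_left)
lemma linear_omult_right: "linear (\<lambda>a. omult c a)"
  by (rule linearI) (simp_all add: omult_add_right omult_scaleR_right)
lemma bounded_linear_omult_left: "bounded_linear (\<lambda>a. omult a c)"
  using linear_omult_left linear_conv_bounded_linear by blast

lemma omult_diff_left: "omult (a - b) c = omult a c - omult b c"
  using linear_diff[OF linear_omult_left] by blast
lemma omult_diff_right: "omult c (a - b) = omult c a - omult c b"
  using linear_diff[OF linear_omult_right] by blast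
lemma omult_sum_left: "omult (\<Sum>i\<in>A. f i) c = (\<Sum>i\<in>A. omult (f i) c)"
  using linear_sum[OF linear_omult_left] by blast
lemma omult_sum_right: "omult c (\<Sum>i\<in>A. f i) = (\<Sum>i\<in>A. omult c (f i))"
  using linear_sum[OF linear_omult_right] by blast
lemma omult_zero_left[simp]: "omult 0 c = 0"
  using linear_0[OF linear_omult_left] by blast
lemma omult_zero_right[simp]: "omult c 0 = 0"
  using linear_0[OF linear_omult_right] by blast

lemma vec_expand: "x = (\<Sum>j<8. comp x j *\<^sub>R ev j)"
proof -
  have "(\<Sum>j<8. comp x j *\<^sub>R ev j) = (\<Sum>i\<in>(UNIV::8 set). x $ i *\<^sub>R axis i 1)"
    unfolding comp_def ev_def by (rule sym[OF sum8])
  also have "\<dots> = x"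
    by (simp add: vec_eq_iff axis_def if_distrib cong: if_cong)
  finally show ?thesis by simp
qed

lemma sum_delta_scaleR: "finite A \<Longrightarrow> j \<in> A \<Longrightarrow> (\<Sum>x\<in>A. (if x = j then 1 else 0) *\<^sub>R f x) = (f j :: 'b::real_vector)"
proof -
  assume a: "finite A" "j \<in> A"
  have "(\<Sum>x\<in>A. (if x = j then 1 else 0) *\<^sub>R f x) = (\<Sum>x\<in>A. if x = j then f x else 0)"
    by (rule sum.cong) auto
  also have "\<dots> = f j" using a by simp
  finally show ?thesis .
qed

lemma omult_ev_ev: "i < 8 \<Longrightarrow> j < 8 \<Longrightarrow> omult (ev i) (ev j) = ebasis_mult i j"
proof -
  assume a: "i < 8" "j < 8"
  have "omult (ev i) (ev j) = (\<Sum>ia<8. (if ia = i then 1 else 0) *\<^sub>R (\<Sum>ja<8. (if ja = j then 1 else 0) *\<^sub>R ebasis_mult ia ja))"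
    unfolding omult_def scaleR_sum_right by (intro sum.cong refl) (simp add: ev_comp a)
  then show ?thesis using a by (simp add: sum_delta_scaleR)
qed

definition sg :: "nat \<Rightarrow> real" where "sg k = (if k = 0 then 1 else -1)"

lemma oconj_sg: "oconj_basis k = sg k *\<^sub>R ev k"
  by (simp add: oconj_basis_def sg_def)

lemma Tval: "k < 8 \<Longrightarrow> l < 8 \<Longrightarrow> j < 8 \<Longrightarrow>
  omult (oconj_basis k) (omult (ev l) (ev j)) = (sg k * ms l j * ms k (mi l j)) *\<^sub>R ev (mi k (mi l j))"
proof -
  assume a: "k < 8" "l < 8" "j < 8"
  have m: "mi l j < 8" using tab_check[OF a] by simp
  show ?thesis
    by (simp add: oconj_sg omult_scaleR_left omult_scaleR_right omult_ev_ev ebasis_tab a m)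
qed

lemma Tpair: "k < 8 \<Longrightarrow> l < 8 \<Longrightarrow> j < 8 \<Longrightarrow>
  omult (oconj_basis k) (omult (ev l) (ev j)) + omult (oconj_basis l) (omult (ev k) (ev j))
   = (if k = l then 2 else 0) *\<^sub>R ev j"
proof -
  assume a: "k < 8" "l < 8" "j < 8"
  note t = tab_check[OF a]
  show ?thesis
  proof (cases "k = l")
    case True
    have "omult (oconj_basis k) (omult (ev l) (ev j)) = ev j"
      using t True by (simp add: Tval a sg_def)
    then show ?thesis using True by (simp add: scaleR_2)
  next
    case False
    then have e: "mi k (mi l j) = mi l (mi k j)"
      and c: "sg k * ms l j * ms k (mi l j) + sg l * ms k j * ms l (mi k j) = 0"
      using t by (simp_all add: sg_def)
    have "omult (oconj_basis k) (omult (ev l) (ev j)) + omult (oconj_basis l) (omult (ev k) (ev j))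
       = (sg k * ms l j * ms k (mi l j) + sg l * ms k j * ms l (mi k j)) *\<^sub>R ev (mi k (mi l j))"
      by (simp add: Tval a e scaleR_add_left)
    then show ?thesis using c False by simp
  qed
qed

lemma Tsum: "k < 8 \<Longrightarrow> l < 8 \<Longrightarrow>
  omult (oconj_basis k) (omult (ev l) c) + omult (oconj_basis l) (omult (ev k) c)
   = (if k = l then 2 else 0) *\<^sub>R c"
proof -
  assume a: "k < 8" "l < 8"
  define e where "e = (\<Sum>j<8. comp c j *\<^sub>R ev j)"
  have ce: "c = e" unfolding e_def by (rule vec_expand)
  have "omult (oconj_basis k) (omult (ev l) e) + omult (oconj_basis l) (omult (ev k) e)
     = (\<Sum>j<8. comp c j *\<^sub>R (omult (oconj_basis k) (omult (ev l) (ev j)) + omult (oconj_basis l) (omult (ev k) (ev j))))"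
    unfolding e_def by (simp add: omult_sum_right omult_scaleR_right sum.distrib scaleR_add_right)
  also have "\<dots> = (\<Sum>j<8. comp c j *\<^sub>R ((if k = l then 2 else 0) *\<^sub>R ev j))"
    by (intro sum.cong refl) (simp add: Tpair a)
  also have "\<dots> = (if k = l then 2 else 0) *\<^sub>R e"
    unfolding e_def by (simp add: scaleR_sum_right mult.commute)
  finally show ?thesis using ce by simp
qed



lemma inner_delta: "l < (8::nat) \<Longrightarrow> (\<Sum>k<8::nat. (s l * s k) *\<^sub>R ((if k = l then 2 else 0) *\<^sub>R (c::real^8))) = (2 * (s l)\<^sup>2) *\<^sub>R c"
proof -
  assume l: "l < 8"
  have "(\<Sum>k<8::nat. (s l * s k) *\<^sub>R ((if k = l then 2 else 0) *\<^sub>R c)) = (\<Sum>k<8::nat. if k = l then (2 * (s l)\<^sup>2) *\<^sub>R c else 0)"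
    by (intro sum.cong refl) (auto simp: power2_eq_square)
  then show ?thesis using l by simp
qed

lemma double_sum_oct: "(\<Sum>l<8. omult (s l *\<^sub>R (\<Sum>k<8. s k *\<^sub>R oconj_basis k)) (omult (ev l) c))
   = (\<Sum>l<8. (s l)\<^sup>2) *\<^sub>R c"
proof -
  define T where "T k l = omult (oconj_basis k) (omult (ev l) c)" for k l
  define X where "X = (\<Sum>l<8::nat. \<Sum>k<8::nat. (s l * s k) *\<^sub>R T k l)"
  have lhs: "(\<Sum>l<8. omult (s l *\<^sub>R (\<Sum>k<8. s k *\<^sub>R oconj_basis k)) (omult (ev l) c)) = X"
    unfolding X_def T_def
    by (simp add: omult_scaleR_left omult_sum_left scaleR_sum_right)
  have swap: "X = (\<Sum>l<8::nat. \<Sum>k<8::nat. (s l * s k) *\<^sub>R T l k)"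
    unfolding X_def by (subst sum.swap) (simp add: mult.commute)
  have "X + X = (\<Sum>l<8::nat. \<Sum>k<8::nat. (s l * s k) *\<^sub>R (T k l + T l k))"
    by (subst swap) (simp only: X_def sum.distrib[symmetric] scaleR_add_right)
  also have "\<dots> = (\<Sum>l<8::nat. \<Sum>k<8::nat. (s l * s k) *\<^sub>R ((if k = l then 2 else 0) *\<^sub>R c))"
    by (intro sum.cong refl) (simp add: T_def Tsum)
  also have "\<dots> = (\<Sum>l<8::nat. (2 * (s l)\<^sup>2) *\<^sub>R c)"
    by (intro sum.cong refl) (rule inner_delta, simp)
  also have "\<dots> = (\<Sum>l<8. (s l)\<^sup>2) *\<^sub>R c + (\<Sum>l<8. (s l)\<^sup>2) *\<^sub>R c"
    by (simp add: scaleR_sum_left[symmetric] sum_distrib_left[symmetric] scaleR_2[symmetric])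
  finally have "X + X = (\<Sum>l<8. (s l)\<^sup>2) *\<^sub>R c + (\<Sum>l<8. (s l)\<^sup>2) *\<^sub>R c" .
  then have "X = (\<Sum>l<8. (s l)\<^sup>2) *\<^sub>R c"
    by (metis scaleR_2 scaleR_left_imp_eq zero_neq_numeral)
  then show ?thesis using lhs by simp
qed



definition QQ :: "(real^8) set" where "QQ = cbox (\<chi> i. - pi) (\<chi> i. pi)"
definition SS :: "real^8 \<Rightarrow> real" where "SS u = (\<Sum>l<8. (sin (comp u l))\<^sup>2)"
definition VV :: "real^8 \<Rightarrow> real^8" where "VV u = (\<Sum>l<8. sin (comp u l) *\<^sub>R oconj_basis l)"
definition FF :: "real^8 \<Rightarrow> real^8 \<Rightarrow> real^8" where "FF w u = (sin (u \<bullet> w) / SS u) *\<^sub>R VV u"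

lemma E1_eq: "E1 x = (1 / (2 * pi) ^ 8) *\<^sub>R integral QQ (FF x)"
  unfolding E1_def QQ_def FF_def SS_def VV_def by simp

lemma bm_lebesgue_on: "f \<in> borel_measurable borel \<Longrightarrow> f \<in> borel_measurable (lebesgue_on S)"
  by (rule measurable_restrict_space1, rule measurable_completion, simp)

lemma cont_comp: "continuous_on UNIV (\<lambda>u::real^8. comp u l)"
  unfolding comp_def by (intro continuous_intros)

lemma FF_measurable: "FF w \<in> borel_measurable borel"
proof -
  have c1: "(\<lambda>u::real^8. sin (u \<bullet> w)) \<in> borel_measurable borel"
    by (intro borel_measurable_continuous_onI continuous_intros)
  have c2: "SS \<in> borel_measurable borel"
    unfolding SS_def by (intro borel_measurable_continuous_onI continuous_intros continuous_on_compose2[OF _ cont_comp]) auto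
  have c3: "VV \<in> borel_measurable borel"
    unfolding VV_def by (intro borel_measurable_continuous_onI continuous_intros continuous_on_compose2[OF _ cont_comp]) auto
  show ?thesis unfolding FF_def
    using c1 c2 c3 by measurable
qed

lemma abs_sin_add: "\<bar>sin (a + b)\<bar> \<le> \<bar>sin a\<bar> + \<bar>sin (b::real)\<bar>"
proof -
  have "\<bar>sin (a + b)\<bar> = \<bar>sin a * cos b + cos a * sin b\<bar>" by (simp add: sin_add)
  also have "\<dots> \<le> \<bar>sin a * cos b\<bar> + \<bar>cos a * sin b\<bar>" by (rule abs_triangle_ineq)
  also have "\<dots> \<le> \<bar>sin a\<bar> + \<bar>sin b\<bar>"
    by (intro add_mono) (simp_all add: abs_mult mult_left_le mult_left_le_one_le)
  finally show ?thesis .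
qed

lemma abs_sin_nat_mult: "\<bar>sin (real n * x)\<bar> \<le> real n * \<bar>sin x\<bar>"
proof (induction n)
  case 0 then show ?case by simp
next
  case (Suc n)
  have "\<bar>sin (real (Suc n) * x)\<bar> = \<bar>sin (real n * x + x)\<bar>" by (simp add: distrib_right add.commute)
  also have "\<dots> \<le> \<bar>sin (real n * x)\<bar> + \<bar>sin x\<bar>" by (rule abs_sin_add)
  also have "\<dots> \<le> real n * \<bar>sin x\<bar> + \<bar>sin x\<bar>" using Suc by simp
  finally show ?case by (simp add: distrib_right)
qed

lemma abs_sin_int_mult: "\<bar>sin (of_int k * (x::real))\<bar> \<le> \<bar>of_int k\<bar> * \<bar>sin x\<bar>"
proof (cases "k \<ge> 0")
  case True
  then have "of_int k = real (nat k)" by simp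
  then show ?thesis using abs_sin_nat_mult[of "nat k" x] True by simp
next
  case False
  then have "of_int k = - real (nat (-k))" by simp
  then show ?thesis using abs_sin_nat_mult[of "nat (-k)" x] False by simp
qed

lemma abs_sin_sum: "finite A \<Longrightarrow> \<bar>sin (\<Sum>i\<in>A. f i :: real)\<bar> \<le> (\<Sum>i\<in>A. \<bar>sin (f i)\<bar>)"
proof (induction A rule: finite_induct)
  case empty then show ?case by simp
next
  case (insert a A)
  then show ?case using abs_sin_add[of "f a" "sum f A"] by simp
qed

lemma sin_comp_le: "\<bar>sin (u $ i)\<bar> \<le> sqrt (SS u)"
proof -
  obtain l where l: "l < 8" "i = of_nat l" using of_nat8_surj by blast
  have "(sin (comp u l))\<^sup>2 \<le> SS u"
    unfolding SS_def by (rule member_le_sum) (use l in auto)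
  then have "sqrt ((sin (comp u l))\<^sup>2) \<le> sqrt (SS u)" by (rule real_sqrt_le_mono)
  then show ?thesis using l by (simp add: comp_def)
qed

lemma SS_nonneg: "SS u \<ge> 0" unfolding SS_def by (simp add: sum_nonneg)

lemma sin_inner_bound: "(\<forall>i. w $ i \<in> \<int>) \<Longrightarrow> \<bar>sin (u \<bullet> w)\<bar> \<le> (\<Sum>i\<in>UNIV. \<bar>w $ i\<bar>) * sqrt (SS u)"
proof -
  assume w: "\<forall>i. w $ i \<in> \<int>"
  have "\<bar>sin (u \<bullet> w)\<bar> \<le> (\<Sum>i\<in>UNIV. \<bar>sin (u $ i * w $ i)\<bar>)"
    unfolding inner_vec_def by (simp add: abs_sin_sum)
  also have "\<dots> \<le> (\<Sum>i\<in>UNIV. \<bar>w $ i\<bar> * sqrt (SS u))"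
  proof (rule sum_mono)
    fix i
    obtain k where k: "w $ i = of_int k" using w by (meson Ints_cases)
    have "\<bar>sin (u $ i * w $ i)\<bar> = \<bar>sin (of_int k * u $ i)\<bar>" by (simp add: k mult.commute)
    also have "\<dots> \<le> \<bar>of_int k\<bar> * \<bar>sin (u $ i)\<bar>" by (rule abs_sin_int_mult)
    also have "\<dots> \<le> \<bar>w $ i\<bar> * sqrt (SS u)" using sin_comp_le[of u i] k
      by (simp add: mult_left_mono)
    finally show "\<bar>sin (u $ i * w $ i)\<bar> \<le> \<bar>w $ i\<bar> * sqrt (SS u)" .
  qed
  also have "\<dots> = (\<Sum>i\<in>UNIV. \<bar>w $ i\<bar>) * sqrt (SS u)" by (simp add: sum_distrib_right)
  finally show ?thesis .
qed

lemma norm_oconj: "l < 8 \<Longrightarrow> norm (oconj_basis l) = 1"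
  by (simp add: oconj_basis_def ev_def)

lemma norm_VV: "norm (VV u) \<le> 8 * sqrt (SS u)"
proof -
  have "norm (VV u) \<le> (\<Sum>l<8. norm (sin (comp u l) *\<^sub>R oconj_basis l))"
    unfolding VV_def by (rule norm_sum)
  also have "\<dots> \<le> (\<Sum>l<(8::nat). sqrt (SS u))"
  proof (rule sum_mono)
    fix l :: nat assume "l \<in> {..<8}"
    then show "norm (sin (comp u l) *\<^sub>R oconj_basis l) \<le> sqrt (SS u)"
      using sin_comp_le[of u "of_nat l"] by (simp add: norm_oconj comp_def)
  qed
  finally show ?thesis by simp
qed

lemma norm_FF: "(\<forall>i. w $ i \<in> \<int>) \<Longrightarrow> norm (FF w u) \<le> 8 * (\<Sum>i\<in>UNIV. \<bar>w $ i\<bar>)"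
proof -
  assume w: "\<forall>i. w $ i \<in> \<int>"
  define W where "W = (\<Sum>i\<in>UNIV. \<bar>w $ i\<bar>)"
  have W0: "W \<ge> 0" unfolding W_def by (simp add: sum_nonneg)
  show ?thesis
  proof (cases "SS u = 0")
    case True then show ?thesis by (simp add: FF_def sum_nonneg)
  next
    case False
    then have Sp: "SS u > 0" using SS_nonneg[of u] by simp
    have "norm (FF w u) = \<bar>sin (u \<bullet> w)\<bar> / SS u * norm (VV u)"
      by (simp add: FF_def abs_of_nonneg[OF SS_nonneg])
    also have "\<dots> \<le> (W * sqrt (SS u)) / SS u * (8 * sqrt (SS u))"
      using sin_inner_bound[OF w, of u] norm_VV[of u] Sp W0
      by (intro mult_mono divide_right_mono) (auto simp: W_def)
    also have "\<dots> = 8 * W" using Sp by (simp add: field_simps)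
    finally show ?thesis unfolding W_def .
  qed
qed

lemma FF_integrable: "(\<forall>i. w $ i \<in> \<int>) \<Longrightarrow> FF w integrable_on QQ"
proof -
  assume w: "\<forall>i. w $ i \<in> \<int>"
  show ?thesis
  proof (rule measurable_bounded_by_integrable_imp_integrable)
    show "FF w \<in> borel_measurable (lebesgue_on QQ)" by (rule bm_lebesgue_on[OF FF_measurable])
    show "(\<lambda>x. 8 * (\<Sum>i\<in>UNIV. \<bar>w $ i\<bar>)) integrable_on QQ" unfolding QQ_def by (intro integrable_continuous continuous_on_const)
    show "\<And>x. x \<in> QQ \<Longrightarrow> norm (FF w x) \<le> 8 * (\<Sum>i\<in>UNIV. \<bar>w $ i\<bar>)" using norm_FF[OF w] by blast
    show "QQ \<in> sets lebesgue" unfolding QQ_def by (simp add: fmeasurableD)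
  qed
qed



lemma axis_in_Basis_1: "axis m (1::real) \<in> Basis"
  by simp

lemma inner_axis_m: "(x::real^8) \<bullet> axis m 1 = x $ m"
  by (simp add: inner_axis)

definition bx :: "8 \<Rightarrow> real \<Rightarrow> real \<Rightarrow> (real^8) set" where
  "bx m p q = cbox (\<chi> i. if i = m then p else - pi) (\<chi> i. if i = m then q else pi)"

lemma mem_bx: "x \<in> bx m p q \<longleftrightarrow> (p \<le> x $ m \<and> x $ m \<le> q \<and> (\<forall>i. i \<noteq> m \<longrightarrow> - pi \<le> x $ i \<and> x $ i \<le> pi))"
proof
  assume "x \<in> bx m p q"
  then have h: "\<forall>i. (\<chi> i. if i = m then p else - pi) $ i \<le> x $ i \<and> x $ i \<le> (\<chi> i. if i = m then q else pi) $ i"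
    unfolding bx_def mem_box_cart by blast
  show "p \<le> x $ m \<and> x $ m \<le> q \<and> (\<forall>i. i \<noteq> m \<longrightarrow> - pi \<le> x $ i \<and> x $ i \<le> pi)"
  proof (intro conjI allI impI)
    show "p \<le> x $ m" using h[rule_format, of m] by simp
    show "x $ m \<le> q" using h[rule_format, of m] by simp
    fix i assume "i \<noteq> m"
    then show "- pi \<le> x $ i" "x $ i \<le> pi" using h[rule_format, of i] by simp_all
  qed
next
  assume h: "p \<le> x $ m \<and> x $ m \<le> q \<and> (\<forall>i. i \<noteq> m \<longrightarrow> - pi \<le> x $ i \<and> x $ i \<le> pi)"
  show "x \<in> bx m p q" unfolding bx_def mem_box_cart
  proof
    fix i show "(\<chi> i. if i = m then p else - pi) $ i \<le> x $ i \<and> x $ i \<le> (\<chi> i. if i = m then q else pi) $ i"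
      using h by (cases "i = m") auto
  qed
qed

lemma bx_le: "bx m p q \<inter> {x. x \<bullet> axis m 1 \<le> c} = bx m p (min q c)"
  by (auto simp: mem_bx inner_axis_m)
lemma bx_ge: "bx m p q \<inter> {x. c \<le> x \<bullet> axis m 1} = bx m (max p c) q"
  by (auto simp: mem_bx inner_axis_m)

lemma QQ_bx: "QQ = bx m (- pi) pi"
  unfolding QQ_def bx_def by (intro arg_cong2[where f=cbox]) (auto simp: vec_eq_iff)

lemma per_shift:
  fixes g :: "real^8 \<Rightarrow> real"
  assumes cont: "continuous_on UNIV g"
    and per: "\<And>u. g (u + (2*pi) *\<^sub>R axis m 1) = g u"
    and t0: "0 \<le> t" and t1: "t \<le> 2*pi"
  shows "integral QQ (\<lambda>u. g (u + t *\<^sub>R axis m 1)) = integral QQ g"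
proof -
  define e :: "real^8" where "e = axis m 1"
  define lo :: "real \<Rightarrow> real^8" where "lo v = (\<chi> i. if i = m then v else - pi)" for v
  define hi :: "real \<Rightarrow> real^8" where "hi v = (\<chi> i. if i = m then v else pi)" for v
  have bxd: "bx m p q = cbox (lo p) (hi q)" for p q unfolding bx_def lo_def hi_def ..
  define c0 where "c0 = t - pi"
  have pi0: "pi > 0" by (rule pi_gt_zero)
  have s1: "cbox (lo (-pi)) (hi pi) \<inter> {x. x \<bullet> e \<le> c0} = cbox (lo (-pi)) (hi c0)"
  proof -
    have "min pi c0 = c0" using t1 by (simp add: c0_def)
    then show ?thesis using bx_le[of m "-pi" pi c0] unfolding bxd e_def by simp
  qed
  have s2: "cbox (lo (-pi)) (hi pi) \<inter> {x. c0 \<le> x \<bullet> e} = cbox (lo c0) (hi pi)"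
    using bx_ge[of m "-pi" pi c0] t0 unfolding bxd e_def c0_def by (simp add: max_def)
  have s3: "cbox (lo c0) (hi (pi + t)) \<inter> {x. x \<bullet> e \<le> pi} = cbox (lo c0) (hi pi)"
    using bx_le[of m c0 "pi + t" pi] t0 unfolding bxd e_def c0_def by (simp add: min_def)
  have s4: "cbox (lo c0) (hi (pi + t)) \<inter> {x. pi \<le> x \<bullet> e} = cbox (lo pi) (hi (pi + t))"
    using bx_ge[of m c0 "pi + t" pi] t1 unfolding bxd e_def c0_def by (simp add: max_def)
  have intg: "\<And>A B. g integrable_on cbox A B"
    by (rule integrable_continuous) (rule continuous_on_subset[OF cont], simp)
  define I1 where "I1 = integral (cbox (lo (-pi)) (hi c0)) g"
  define I2 where "I2 = integral (cbox (lo c0) (hi pi)) g"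
  have i1: "(g has_integral I1) (cbox (lo (-pi)) (hi c0))" unfolding I1_def using intg by blast
  have i2: "(g has_integral I2) (cbox (lo c0) (hi pi))" unfolding I2_def using intg by blast
  have eB: "e \<in> Basis" unfolding e_def by (rule axis_in_Basis_1)
  have h1: "(g has_integral I1 + I2) (cbox (lo (-pi)) (hi pi))"
    by (rule has_integral_split[OF _ _ eB, of g I1 _ _ c0 I2]) (simp_all add: s1 s2 i1 i2)
  have fe1: "(\<lambda>x. g (1 *\<^sub>R x + - ((2*pi) *\<^sub>R e))) = g"
  proof
    fix x
    have "g (x - (2*pi) *\<^sub>R e) = g (x - (2*pi) *\<^sub>R e + (2*pi) *\<^sub>R e)" using per[of "x - (2*pi) *\<^sub>R e"] by (simp add: e_def)
    then show "g (1 *\<^sub>R x + - ((2*pi) *\<^sub>R e)) = g x" by simp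
  qed
  have box1: "(lo (-pi) - - ((2*pi) *\<^sub>R e)) /\<^sub>R 1 = lo pi" "(hi c0 - - ((2*pi) *\<^sub>R e)) /\<^sub>R 1 = hi (pi + t)"
    by (auto simp: vec_eq_iff lo_def hi_def e_def axis_def c0_def)
  have h2: "(g has_integral I1) (cbox (lo pi) (hi (pi + t)))"
    using has_integral_affinity_iff[of 1 g "- ((2*pi) *\<^sub>R e)" I1 "lo (-pi)" "hi c0"] i1
    unfolding fe1 box1 by simp
  have h3: "(g has_integral I2 + I1) (cbox (lo c0) (hi (pi + t)))"
    by (rule has_integral_split[OF _ _ eB, of g I2 _ _ pi I1]) (simp_all add: s3 s4 i2 h2)
  have box2: "(lo c0 - t *\<^sub>R e) /\<^sub>R 1 = lo (-pi)" "(hi (pi + t) - t *\<^sub>R e) /\<^sub>R 1 = hi pi"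
    by (auto simp: vec_eq_iff lo_def hi_def e_def axis_def c0_def)
  have h4: "((\<lambda>x. g (x + t *\<^sub>R e)) has_integral I2 + I1) (cbox (lo (-pi)) (hi pi))"
    using has_integral_affinity_iff[of 1 g "t *\<^sub>R e" "I2 + I1" "lo c0" "hi (pi + t)"] h3
    unfolding box2 by simp
  have QQ: "QQ = cbox (lo (-pi)) (hi pi)" using QQ_bx[of m] unfolding bxd .
  show ?thesis
    using h1 h4 unfolding QQ e_def
    by (metis add.commute integral_unique)
qed

lemma content_QQ: "Henstock_Kurzweil_Integration.content QQ = (2*pi)^8"
proof -
  have ne: "QQ \<noteq> {}"
  proof -
    have "0 \<in> QQ" unfolding QQ_def mem_box_cart by simp
    then show ?thesis by blast
  qed
  have "Henstock_Kurzweil_Integration.content QQ = (\<Prod>i\<in>(UNIV::8 set). pi - - pi)"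
    using ne unfolding QQ_def by (simp add: content_cbox_cart)
  also have "\<dots> = (2*pi)^8" by simp
  finally show ?thesis .
qed

lemma cos_integral: "(\<forall>i. z $ i \<in> \<int>) \<Longrightarrow> integral QQ (\<lambda>u. cos (u \<bullet> z)) = (if z = 0 then (2*pi)^8 else 0)"
proof (cases "z = 0")
  case True
  have "integral QQ (\<lambda>u. 1::real) = Henstock_Kurzweil_Integration.content QQ *\<^sub>R 1"
    unfolding QQ_def by (rule integral_const)
  then show ?thesis using True by (simp add: content_QQ)
next
  case False
  assume zi: "\<forall>i. z $ i \<in> \<int>"
  obtain m where m: "z $ m \<noteq> 0" using False by (auto simp: vec_eq_iff)
  obtain k where k: "z $ m = of_int k" using zi by (meson Ints_cases)
  have k0: "k \<noteq> 0" using m k by simp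
  define t where "t = pi / \<bar>of_int k\<bar>"
  have ak: "\<bar>(of_int k::real)\<bar> \<ge> 1" using k0 by linarith
  have t0: "0 \<le> t" unfolding t_def by simp
  have t1: "t \<le> 2*pi"
  proof -
    have "t \<le> pi" unfolding t_def using ak by (simp add: divide_le_eq)
    then show ?thesis using pi_gt_zero by linarith
  qed
  define g where "g u = cos (u \<bullet> z)" for u :: "real^8"
  have cont: "continuous_on UNIV g" unfolding g_def by (intro continuous_intros)
  have sh: "(u + r *\<^sub>R axis m 1) \<bullet> z = u \<bullet> z + r * of_int k" for u r
    by (simp add: inner_add_left inner_axis' k)
  have per: "g (u + (2*pi) *\<^sub>R axis m 1) = g u" for u
  proof -
    have "g (u + (2*pi) *\<^sub>R axis m 1) = cos (u \<bullet> z + 2 * pi * of_int k)"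
      unfolding g_def sh by (simp add: mult.assoc)
    also have "\<dots> = g u" unfolding g_def cos_add by (simp add: cos_int_2pin sin_int_2pin)
    finally show ?thesis .
  qed
  have neg: "g (u + t *\<^sub>R axis m 1) = - g u" for u
  proof -
    have "t * of_int k = (if k > 0 then pi else - pi)"
      unfolding t_def using k0 by (auto simp: abs_if)
    then show ?thesis unfolding g_def sh by (auto simp: cos_add)
  qed
  have "integral QQ g = integral QQ (\<lambda>u. g (u + t *\<^sub>R axis m 1))"
    using per_shift[OF cont per t0 t1] by simp
  also have "\<dots> = - integral QQ g" by (simp add: neg integral_neg)
  finally have "integral QQ g = 0" by simp
  then show ?thesis using False unfolding g_def by simp
qed



lemma ev_int: "(ev l) $ i \<in> \<int>"
  by (simp add: ev_def axis_def)

lemma inner_ev: "u \<bullet> ev l = comp u l"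
  by (simp add: ev_def comp_def inner_axis)

lemma negl_N: "negligible {u \<in> QQ. sin (comp u 0) = 0}"
proof -
  define e :: "real^8" where "e = axis 0 1"
  have eB: "e \<in> Basis" unfolding e_def by simp
  have sub: "{u \<in> QQ. sin (comp u 0) = 0} \<subseteq> {x. x \<bullet> e = - pi} \<union> {x. x \<bullet> e = 0} \<union> {x. x \<bullet> e = pi}"
  proof
    fix u assume u: "u \<in> {u \<in> QQ. sin (comp u 0) = 0}"
    then have b: "- pi \<le> u $ 0" "u $ 0 \<le> pi" unfolding QQ_def mem_box_cart by auto
    from u obtain i where i: "u $ 0 = of_int i * pi" by (auto simp: comp_def sin_zero_iff_int2)
    have "- 1 \<le> i \<and> i \<le> 1"
    proof -
      have "0 \<le> (of_int i + 1) * pi" "0 \<le> (1 - of_int i) * pi" using b i by (simp_all add: algebra_simps)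
      then have "0 \<le> (of_int i + 1::real)" "0 \<le> (1 - of_int i::real)"
        using pi_gt_zero by (simp_all add: zero_le_mult_iff)
      then show ?thesis by linarith
    qed
    then have "i = -1 \<or> i = 0 \<or> i = 1" by linarith
    then show "u \<in> {x. x \<bullet> e = - pi} \<union> {x. x \<bullet> e = 0} \<union> {x. x \<bullet> e = pi}"
      using i by (auto simp: e_def inner_axis)
  qed
  show ?thesis
    by (rule negligible_subset[OF _ sub]) (simp add: negligible_Un negligible_standard_hyperplane eB)
qed

lemma SS_pos: "sin (comp u 0) \<noteq> 0 \<Longrightarrow> SS u \<noteq> 0"
proof -
  assume a: "sin (comp u 0) \<noteq> 0"
  have "(sin (comp u 0))\<^sup>2 \<le> SS u" unfolding SS_def by (rule member_le_sum) auto
  moreover have "(sin (comp u 0))\<^sup>2 > 0" using a by simp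
  ultimately show ?thesis by linarith
qed

lemma key_L:
  assumes z: "\<forall>i. z $ i \<in> \<int>"
  shows "(\<Sum>l<8. omult (E1 (z + ev l) - E1 (z - ev l)) (omult (ev l) c)) = (if z = 0 then 2 else 0) *\<^sub>R c"
proof -
  define \<kappa> :: real where "\<kappa> = 1 / (2 * pi) ^ 8"
  define G where "G l u = FF (z + ev l) u - FF (z - ev l) u" for l u
  define H where "H l u = omult (G l u) (omult (ev l) c)" for l u
  have zp: "\<forall>i. (z + ev l) $ i \<in> \<int>" "\<forall>i. (z - ev l) $ i \<in> \<int>" for l
    using z ev_int by auto
  have Gint: "G l integrable_on QQ" for l
    unfolding G_def by (intro integrable_diff FF_integrable zp)
  have Hint: "H l integrable_on QQ" for l
    unfolding H_def using integrable_linear[OF Gint bounded_linear_omult_left] by (simp add: o_def)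
  have E1d: "E1 (z + ev l) - E1 (z - ev l) = \<kappa> *\<^sub>R integral QQ (G l)" for l
    unfolding E1_eq G_def \<kappa>_def
    by (simp add: integral_diff[OF FF_integrable[OF zp(1)] FF_integrable[OF zp(2)]] scaleR_diff_right)
  have om: "omult (E1 (z + ev l) - E1 (z - ev l)) (omult (ev l) c) = \<kappa> *\<^sub>R integral QQ (H l)" for l
  proof -
    have Hl: "H l = (\<lambda>x. omult (G l x) (omult (ev l) c))" by (rule ext) (simp add: H_def)
    have "integral QQ (H l) = omult (integral QQ (G l)) (omult (ev l) c)"
      unfolding Hl using integral_linear[OF Gint bounded_linear_omult_left, of "omult (ev l) c"]
      by (simp add: o_def H_def)
    then show ?thesis by (simp add: E1d omult_scaleR_left)
  qed
  have "(\<Sum>l<8. omult (E1 (z + ev l) - E1 (z - ev l)) (omult (ev l) c)) = \<kappa> *\<^sub>R (\<Sum>l<8. integral QQ (H l))"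
    by (simp add: om scaleR_sum_right)
  also have "(\<Sum>l<8. integral QQ (H l)) = integral QQ (\<lambda>u. \<Sum>l<8. H l u)"
    by (rule integral_sum[symmetric]) (simp_all add: Hint)
  also have "\<dots> = integral QQ (\<lambda>u. (2 * cos (u \<bullet> z)) *\<^sub>R c)"
  proof (rule integral_spike[OF negl_N])
    fix u assume u: "u \<in> QQ - {u \<in> QQ. sin (comp u 0) = 0}"
    then have Sn: "SS u \<noteq> 0" using SS_pos by auto
    define r where "r = 2 * cos (u \<bullet> z) / SS u"
    have Gu: "G l u = (r * sin (comp u l)) *\<^sub>R VV u" for l
    proof -
      have "sin (u \<bullet> z + comp u l) - sin (u \<bullet> z - comp u l) = 2 * cos (u \<bullet> z) * sin (comp u l)"
        by (simp add: sin_add sin_diff)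
      then show ?thesis
        unfolding G_def FF_def r_def
        by (simp add: inner_add_right inner_diff_right inner_ev scaleR_diff_left[symmetric] diff_divide_distrib[symmetric])
    qed
    have "(\<Sum>l<8. H l u) = r *\<^sub>R (\<Sum>l<8. omult (sin (comp u l) *\<^sub>R VV u) (omult (ev l) c))"
      unfolding H_def Gu by (simp add: omult_scaleR_left scaleR_sum_right)
    also have "\<dots> = r *\<^sub>R (SS u *\<^sub>R c)"
      unfolding VV_def SS_def by (subst double_sum_oct) simp
    also have "\<dots> = (2 * cos (u \<bullet> z)) *\<^sub>R c" using Sn by (simp add: r_def)
    finally show "(2 * cos (u \<bullet> z)) *\<^sub>R c = (\<Sum>l<8. H l u)" by simp
  qed
  also have "\<dots> = (2 * integral QQ (\<lambda>u. cos (u \<bullet> z))) *\<^sub>R c"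
  proof -
    have ci: "(\<lambda>u. cos (u \<bullet> z)) integrable_on QQ"
      unfolding QQ_def by (intro integrable_continuous continuous_intros)
    have "integral QQ ((\<lambda>r. r *\<^sub>R c) \<circ> (\<lambda>u. 2 * cos (u \<bullet> z))) = integral QQ (\<lambda>u. 2 * cos (u \<bullet> z)) *\<^sub>R c"
      by (rule integral_linear[OF _ bounded_linear_scaleR_left]) (simp add: ci integrable_on_cmult_left)
    then show ?thesis by (simp add: o_def)
  qed
  also have "\<dots> = (2 * (if z = 0 then (2*pi)^8 else 0)) *\<^sub>R c"
    by (simp add: cos_integral[OF z])
  finally show ?thesis unfolding \<kappa>_def by simp
qed



lemma ev_nth: "ev l $ i = (if i = of_nat l then 1 else 0)"
  by (simp add: ev_def axis_def)

lemma lattice_add: "x \<in> lattice h \<Longrightarrow> x + h *\<^sub>R ev l \<in> lattice h"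
proof -
  assume x: "x \<in> lattice h"
  show ?thesis unfolding lattice_def
  proof (intro CollectI allI)
    fix i
    obtain k where k: "x $ i = h * of_int k" using x unfolding lattice_def by blast
    show "\<exists>k::int. (x + h *\<^sub>R ev l) $ i = h * of_int k"
      by (rule exI[of _ "k + (if i = of_nat l then 1 else 0)"]) (simp add: k ev_nth algebra_simps)
  qed
qed

lemma lattice_diff: "x \<in> lattice h \<Longrightarrow> x - h *\<^sub>R ev l \<in> lattice h"
proof -
  assume x: "x \<in> lattice h"
  show ?thesis unfolding lattice_def
  proof (intro CollectI allI)
    fix i
    obtain k where k: "x $ i = h * of_int k" using x unfolding lattice_def by blast
    show "\<exists>k::int. (x - h *\<^sub>R ev l) $ i = h * of_int k"
      by (rule exI[of _ "k - (if i = of_nat l then 1 else 0)"]) (simp add: k ev_nth algebra_simps)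
  qed
qed

lemma lattice_int: "h > 0 \<Longrightarrow> x \<in> lattice h \<Longrightarrow> y \<in> lattice h \<Longrightarrow> \<forall>i. ((1/h) *\<^sub>R (y - x)) $ i \<in> \<int>"
proof
  fix i assume h: "h > 0" and x: "x \<in> lattice h" and y: "y \<in> lattice h"
  obtain k where k: "x $ i = h * of_int k" using x unfolding lattice_def by blast
  obtain j where j: "y $ i = h * of_int j" using y unfolding lattice_def by blast
  have "((1/h) *\<^sub>R (y - x)) $ i = of_int (j - k)" using h by (simp add: k j field_simps)
  then show "((1/h) *\<^sub>R (y - x)) $ i \<in> \<int>" by simp
qed

lemma nbhd_lattice: "x \<in> lattice h \<Longrightarrow> nbhd h x \<subseteq> lattice h"
  unfolding nbhd_def using lattice_add lattice_diff by auto

lemma finite_nbhd: "finite (nbhd h x)"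
  unfolding nbhd_def by simp

lemma finite_B:
  assumes h: "h > 0" and B: "B \<subseteq> lattice h" and bB: "bounded B"
  shows "finite B"
proof -
  obtain R where R: "\<And>x. x \<in> B \<Longrightarrow> norm x \<le> R" using bB unfolding bounded_iff by blast
  define N where "N = ceiling (R / h)"
  define K where "K x = (\<lambda>i. SOME k::int. x $ i = h * of_int k)" for x :: "real^8"
  have Kx: "x $ i = h * of_int (K x i)" if "x \<in> B" for x i
  proof -
    have "\<exists>k::int. x $ i = h * of_int k" using that B unfolding lattice_def by blast
    then show ?thesis unfolding K_def by (rule someI_ex)
  qed
  have sub: "B \<subseteq> (\<lambda>k. \<chi> i. h * of_int (k i)) ` (Pi UNIV (\<lambda>_. {-N..N}))"
  proof
    fix x assume x: "x \<in> B"
    have "K x \<in> Pi UNIV (\<lambda>_. {-N..N})"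
    proof
      fix i :: 8
      have "\<bar>h * of_int (K x i)\<bar> \<le> R" using Kx[OF x, of i] R[OF x] component_le_norm_cart[of x i] by simp
      then have "\<bar>of_int (K x i)\<bar> \<le> R / h" using h by (simp add: abs_mult field_simps)
      then have "\<bar>of_int (K x i)\<bar> \<le> (of_int N :: real)" unfolding N_def by (meson le_of_int_ceiling order_trans)
      then have "\<bar>K x i\<bar> \<le> N" by (metis of_int_abs of_int_le_iff)
      then show "K x i \<in> {-N..N}" by (simp add: abs_le_iff)
    qed
    moreover have "x = (\<chi> i. h * of_int (K x i))" using Kx[OF x] by (simp add: vec_eq_iff)
    ultimately show "x \<in> (\<lambda>k. \<chi> i. h * of_int (k i)) ` (Pi UNIV (\<lambda>_. {-N..N}))" by blast
  qed
  have "finite (Pi UNIV (\<lambda>_::8. {-N..N}))"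
    using finite_PiE[of "UNIV::8 set" "\<lambda>_. {-N..N}"] by (simp add: PiE_UNIV_domain)
  then show ?thesis using sub finite_subset by blast
qed

lemma nbhd_sym: "y \<in> nbhd h x \<Longrightarrow> x \<in> nbhd h y"
  unfolding nbhd_def by (auto simp: algebra_simps)

lemma finite_bd:
  assumes "finite B" shows "finite (bd h B)"
proof -
  have "bd h B \<subseteq> (\<Union>b\<in>B. nbhd h b)"
  proof
    fix x assume "x \<in> bd h B"
    then obtain b where "b \<in> nbhd h x" "b \<in> B" unfolding bd_def by blast
    then show "x \<in> (\<Union>b\<in>B. nbhd h b)" using nbhd_sym by blast
  qed
  moreover have "finite (\<Union>b\<in>B. nbhd h b)" using assms finite_nbhd by blast
  ultimately show ?thesis using finite_subset by blast
qed



lemma ev_in_nbhd: "l < 8 \<Longrightarrow> x + h *\<^sub>R ev l \<in> nbhd h x" "l < 8 \<Longrightarrow> x - h *\<^sub>R ev l \<in> nbhd h x"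
  unfolding nbhd_def by auto

lemma nbhd_cases: "w \<in> nbhd h x \<Longrightarrow> w = x \<or> (\<exists>l<8. w = x + h *\<^sub>R ev l \<or> w = x - h *\<^sub>R ev l)"
  unfolding nbhd_def by auto

lemma Sig_nonneg: "Sig h B x \<ge> 0" unfolding Sig_def by (intro sum_nonneg) simp

lemma Sig_pos:
  assumes h: "h > 0" and x: "x \<in> bd h B"
  shows "Sig h B x > 0"
proof (rule ccontr)
  assume "\<not> Sig h B x > 0"
  then have "Sig h B x = 0" using Sig_nonneg[of h B x] by simp
  then have z: "\<forall>l\<in>{..<8}. (dplus h l (chi B) x)\<^sup>2 + (dminus h l (chi B) x)\<^sup>2 = 0"
    unfolding Sig_def by (subst sum_nonneg_eq_0_iff[symmetric]) auto
  have const: "chi B w = chi B x" if "w \<in> nbhd h x" for w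
  proof -
    from nbhd_cases[OF that] show ?thesis
    proof (elim disjE exE conjE)
      fix l assume l: "l < 8" and w: "w = x + h *\<^sub>R ev l"
      have "dplus h l (chi B) x = 0" using z l by (simp add: add_nonneg_eq_0_iff)
      then show ?thesis using h w by (simp add: dplus_def)
    next
      fix l assume l: "l < 8" and w: "w = x - h *\<^sub>R ev l"
      have "dminus h l (chi B) x = 0" using z l by (simp add: add_nonneg_eq_0_iff)
      then show ?thesis using h w by (simp add: dminus_def)
    qed simp
  qed
  from x obtain b n where b: "b \<in> nbhd h x" "b \<in> B" and n: "n \<in> nbhd h x" "n \<notin> B"
    unfolding bd_def by blast
  have "chi B b = 1" "chi B n = 0" using b n by (simp_all add: chi_def)
  then show False using const[OF b(1)] const[OF n(1)] by simp
qed

lemma d_zero_off_bd: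
  assumes x: "x \<in> lattice h" and nx: "x \<notin> bd h B" and l: "l < 8"
  shows "dminus h l (chi B) x = 0" "dplus h l (chi B) x = 0"
proof -
  have "nbhd h x \<inter> B = {} \<or> nbhd h x \<inter> (lattice h - B) = {}" using x nx unfolding bd_def by blast
  then have "(\<forall>w\<in>nbhd h x. chi B w = 0) \<or> (\<forall>w\<in>nbhd h x. chi B w = 1)"
    using nbhd_lattice[OF x] by (auto simp: chi_def)
  moreover have "x \<in> nbhd h x" unfolding nbhd_def by simp
  ultimately show "dminus h l (chi B) x = 0" "dplus h l (chi B) x = 0"
    using ev_in_nbhd[OF l, of x h] by (auto simp: dminus_def dplus_def)
qed

lemma sfac_n:
  assumes h: "h > 0" and x: "x \<in> bd h B"
  shows "sfac h B x * nminus h B l x = - (h^8) * dminus h l (chi B) x"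
    "sfac h B x * nplus h B l x = - (h^8) * dplus h l (chi B) x"
proof -
  have p: "sqrt (Sig h B x) > 0" using Sig_pos[OF h x] by simp
  show "sfac h B x * nminus h B l x = - (h^8) * dminus h l (chi B) x"
    "sfac h B x * nplus h B l x = - (h^8) * dplus h l (chi B) x"
    using p by (simp_all add: sfac_def nminus_def nplus_def field_simps)
qed

lemma sum_ind_scaleR: "finite T \<Longrightarrow> A \<subseteq> T \<Longrightarrow> (\<Sum>x\<in>T. (if x \<in> A then 1 else 0) *\<^sub>R (f x :: 'b::real_vector)) = (\<Sum>x\<in>A. f x)"
proof -
  assume T: "finite T" and A: "A \<subseteq> T"
  have "(\<Sum>x\<in>T. (if x \<in> A then 1 else 0) *\<^sub>R f x) = (\<Sum>x\<in>T. if x \<in> A then f x else 0)"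
    by (rule sum.cong) auto
  also have "\<dots> = (\<Sum>x\<in>T \<inter> A. f x)" using T by (simp add: sum.inter_restrict)
  also have "T \<inter> A = A" using A by blast
  finally show ?thesis .
qed

lemma sbp:
  fixes P M :: "real^8 \<Rightarrow> real^8"
  assumes h: "h > 0" and B: "B \<subseteq> lattice h" and fB: "finite B" and l: "l < 8"
    and PM: "\<And>b. P (b + h *\<^sub>R ev l) = M (b - h *\<^sub>R ev l)"
  shows "(\<Sum>x\<in>bd h B. dminus h l (chi B) x *\<^sub>R P x + dplus h l (chi B) x *\<^sub>R M x)
       = (1/h) *\<^sub>R (\<Sum>b\<in>B. P b - M b)"
proof -
  define v where "v = h *\<^sub>R ev l"
  define Ap where "Ap = (\<lambda>b. b + v) ` B"
  define Am where "Am = (\<lambda>b. b - v) ` B"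
  define T where "T = bd h B \<union> B \<union> Ap \<union> Am"
  have fbd: "finite (bd h B)" by (rule finite_bd[OF fB])
  have fT: "finite T" unfolding T_def Ap_def Am_def using fbd fB by simp
  have Tl: "T \<subseteq> lattice h"
    unfolding T_def Ap_def Am_def v_def using B lattice_add lattice_diff by (auto simp: bd_def)
  define F where "F x = dminus h l (chi B) x *\<^sub>R P x + dplus h l (chi B) x *\<^sub>R M x" for x
  have "(\<Sum>x\<in>bd h B. F x) = (\<Sum>x\<in>T. F x)"
  proof (rule sum.mono_neutral_left[OF fT])
    show "bd h B \<subseteq> T" unfolding T_def by blast
    show "\<forall>x\<in>T - bd h B. F x = 0"
      using d_zero_off_bd[OF _ _ l] Tl unfolding F_def by auto
  qed
  also have "\<dots> = (1/h) *\<^sub>R ((\<Sum>x\<in>T. chi B x *\<^sub>R P x) - (\<Sum>x\<in>T. chi B (x - v) *\<^sub>R P x)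
                + (\<Sum>x\<in>T. chi B (x + v) *\<^sub>R M x) - (\<Sum>x\<in>T. chi B x *\<^sub>R M x))"
    unfolding F_def dminus_def dplus_def v_def
    by (simp add: scaleR_sum_right sum_subtractf[symmetric] sum.distrib[symmetric] algebra_simps
        scaleR_diff_left scaleR_diff_right divide_inverse)
  also have "(\<Sum>x\<in>T. chi B x *\<^sub>R P x) = (\<Sum>b\<in>B. P b)"
    unfolding chi_def by (rule sum_ind_scaleR[OF fT]) (auto simp: T_def)
  also have "(\<Sum>x\<in>T. chi B x *\<^sub>R M x) = (\<Sum>b\<in>B. M b)"
    unfolding chi_def by (rule sum_ind_scaleR[OF fT]) (auto simp: T_def)
  also have "(\<Sum>x\<in>T. chi B (x - v) *\<^sub>R P x) = (\<Sum>b\<in>B. P (b + v))"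
  proof -
    have "(\<Sum>x\<in>T. chi B (x - v) *\<^sub>R P x) = (\<Sum>x\<in>T. (if x \<in> Ap then 1 else 0) *\<^sub>R P x)"
      by (rule sum.cong) (auto simp: chi_def Ap_def image_iff algebra_simps)
    also have "\<dots> = (\<Sum>x\<in>Ap. P x)" by (rule sum_ind_scaleR[OF fT]) (auto simp: T_def)
    also have "\<dots> = (\<Sum>b\<in>B. P (b + v))" unfolding Ap_def
      by (subst sum.reindex) (auto simp: inj_on_def)
    finally show ?thesis .
  qed
  also have "(\<Sum>x\<in>T. chi B (x + v) *\<^sub>R M x) = (\<Sum>b\<in>B. M (b - v))"
  proof -
    have "(\<Sum>x\<in>T. chi B (x + v) *\<^sub>R M x) = (\<Sum>x\<in>T. (if x \<in> Am then 1 else 0) *\<^sub>R M x)"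
      by (rule sum.cong) (auto simp: chi_def Am_def image_iff algebra_simps)
    also have "\<dots> = (\<Sum>x\<in>Am. M x)" by (rule sum_ind_scaleR[OF fT]) (auto simp: T_def)
    also have "\<dots> = (\<Sum>b\<in>B. M (b - v))" unfolding Am_def
      by (subst sum.reindex) (auto simp: inj_on_def)
    finally show ?thesis .
  qed
  also have "(\<Sum>b\<in>B. M (b - v)) = (\<Sum>b\<in>B. P (b + v))" using PM unfolding v_def by simp
  finally show ?thesis unfolding F_def by (simp add: sum_subtractf)
qed



lemma star_expand:
  assumes h: "h > 0" and x: "x \<in> bd h B"
  shows "sfac h B x *\<^sub>R star h B y g x = (\<Sum>l<8. (h^8/2) *\<^sub>R
      (dminus h l (chi B) x *\<^sub>R omult (Eh h (h *\<^sub>R ev l - x + y)) (omult (ev l) (g x))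
     + dplus h l (chi B) x *\<^sub>R omult (Eh h (- (h *\<^sub>R ev l) - x + y)) (omult (ev l) (g x))))"
proof -
  have "sfac h B x *\<^sub>R star h B y g x = (\<Sum>l<8.
      (- (1/2) * (sfac h B x * nminus h B l x)) *\<^sub>R omult (Eh h (h *\<^sub>R ev l - x + y)) (omult (ev l) (g x))
     + (- (1/2) * (sfac h B x * nplus h B l x)) *\<^sub>R omult (Eh h (- (h *\<^sub>R ev l) - x + y)) (omult (ev l) (g x)))"
    unfolding star_def by (simp add: scaleR_sum_right omult_add_left omult_scaleR_left scaleR_add_right scaleR_diff_right)
  also have "\<dots> = (\<Sum>l<8. (h^8/2) *\<^sub>R
      (dminus h l (chi B) x *\<^sub>R omult (Eh h (h *\<^sub>R ev l - x + y)) (omult (ev l) (g x))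
     + dplus h l (chi B) x *\<^sub>R omult (Eh h (- (h *\<^sub>R ev l) - x + y)) (omult (ev l) (g x))))"
    by (intro sum.cong refl) (simp add: sfac_n[OF h x] scaleR_add_right)
  finally show ?thesis .
qed

lemma key_K:
  assumes h: "h > 0" and B: "B \<subseteq> lattice h" and bB: "bounded B" and y: "y \<in> lattice h"
  shows "surf_int h B (star h B y (\<lambda>_. c)) = chi B y *\<^sub>R c"
proof -
  have fB: "finite B" by (rule finite_B[OF h B bB])
  have fbd: "finite (bd h B)" by (rule finite_bd[OF fB])
  define d where "d l = omult (ev l) c" for l
  define P where "P l x = omult (Eh h (h *\<^sub>R ev l - x + y)) (d l)" for l x
  define M where "M l x = omult (Eh h (- (h *\<^sub>R ev l) - x + y)) (d l)" for l x
  have "surf_int h B (star h B y (\<lambda>_. c)) = (\<Sum>x\<in>bd h B. \<Sum>l<8. (h^8/2) *\<^sub>R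
      (dminus h l (chi B) x *\<^sub>R P l x + dplus h l (chi B) x *\<^sub>R M l x))"
    unfolding surf_int_def P_def M_def d_def by (intro sum.cong refl) (simp add: star_expand[OF h])
  also have "\<dots> = (h^8/2) *\<^sub>R (\<Sum>l<8. \<Sum>x\<in>bd h B. dminus h l (chi B) x *\<^sub>R P l x + dplus h l (chi B) x *\<^sub>R M l x)"
    by (subst sum.swap) (simp add: scaleR_sum_right)
  also have "\<dots> = (h^8/2) *\<^sub>R (\<Sum>l<8. (1/h) *\<^sub>R (\<Sum>b\<in>B. P l b - M l b))"
  proof -
    have "(\<Sum>x\<in>bd h B. dminus h l (chi B) x *\<^sub>R P l x + dplus h l (chi B) x *\<^sub>R M l x)
          = (1/h) *\<^sub>R (\<Sum>b\<in>B. P l b - M l b)" if l: "l < 8" for l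
    proof (rule sbp[OF h B fB l])
      fix b
      have "h *\<^sub>R ev l - (b + h *\<^sub>R ev l) + y = - (h *\<^sub>R ev l) - (b - h *\<^sub>R ev l) + y" by (simp add: algebra_simps)
      then show "P l (b + h *\<^sub>R ev l) = M l (b - h *\<^sub>R ev l)" unfolding P_def M_def by simp
    qed
    then show ?thesis by (intro arg_cong[where f="\<lambda>v. (h^8/2) *\<^sub>R v"] sum.cong refl) simp
  qed
  also have "\<dots> = (h^7/2) *\<^sub>R (\<Sum>b\<in>B. \<Sum>l<8. P l b - M l b)"
    using h by (subst sum.swap) (simp add: scaleR_sum_right power_eq_if)
  also have "\<dots> = (h^7/2) *\<^sub>R (\<Sum>b\<in>B. (1/h^7) *\<^sub>R ((if b = y then 2 else 0) *\<^sub>R c))"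
  proof -
    have "(\<Sum>l<8. P l b - M l b) = (1/h^7) *\<^sub>R ((if b = y then 2 else 0) *\<^sub>R c)" if b: "b \<in> B" for b
    proof -
      define z where "z = (1/h) *\<^sub>R (y - b)"
      have zi: "\<forall>i. z $ i \<in> \<int>" unfolding z_def using lattice_int[OF h _ y] b B by blast
      have a1: "(1/h) *\<^sub>R (h *\<^sub>R ev l - b + y) = z + ev l" for l
        using h by (simp add: z_def algebra_simps scaleR_diff_right)
      have a2: "(1/h) *\<^sub>R (- (h *\<^sub>R ev l) - b + y) = z - ev l" for l
        using h by (simp add: z_def algebra_simps scaleR_diff_right)
      have "(\<Sum>l<8. P l b - M l b) = (1/h^7) *\<^sub>R (\<Sum>l<8. omult (E1 (z + ev l) - E1 (z - ev l)) (omult (ev l) c))"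
        unfolding P_def M_def Eh_def d_def a1 a2
        by (simp add: scaleR_sum_right omult_scaleR_left omult_diff_left scaleR_diff_right)
      also have "\<dots> = (1/h^7) *\<^sub>R ((if z = 0 then 2 else 0) *\<^sub>R c)" by (simp add: key_L[OF zi])
      also have "(z = 0) = (b = y)" using h unfolding z_def by auto
      finally show ?thesis .
    qed
    then show ?thesis by (intro arg_cong[where f="\<lambda>v. (h^7/2) *\<^sub>R v"] sum.cong refl) simp
  qed
  also have "\<dots> = chi B y *\<^sub>R c"
  proof -
    have "(\<Sum>b\<in>B. (1/h^7) *\<^sub>R ((if b = y then 2 else 0) *\<^sub>R c)) = (\<Sum>b\<in>B. if b = y then (2/h^7) *\<^sub>R c else 0)"
      by (rule sum.cong) auto
    also have "\<dots> = (if y \<in> B then (2/h^7) *\<^sub>R c else 0)" using fB by (simp add: sum.delta')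
    finally show ?thesis using h by (simp add: chi_def)
  qed
  finally show ?thesis .
qed



lemma star_diff: "star h B y (\<lambda>x. g x - c) x = star h B y g x - star h B y (\<lambda>_. c) x"
  unfolding star_def
  by (simp add: omult_diff_right sum_subtractf scaleR_diff_right)

lemma surf_int_diff: "surf_int h B (\<lambda>x. g1 x - g2 x) = surf_int h B g1 - surf_int h B g2"
  unfolding surf_int_def by (simp add: scaleR_diff_right sum_subtractf)

theorem mainTheorem10:
  fixes h :: real and B :: "(real ^ 8) set" and f :: "real ^ 8 \<Rightarrow> real ^ 8"
  assumes "h > 0" and "B \<subseteq> lattice h" and "bounded B"
  shows "(\<forall>y \<in> bd h B \<inter> B. Cop h B f y = (1/2) *\<^sub>R (f y + Sop h B f y))
       \<and> (\<forall>y \<in> bd h B - B. Cop h B f y = (1/2) *\<^sub>R (- f y + Sop h B f y))"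
proof -
  have S: "Sop h B f y = 2 *\<^sub>R Cop h B f y - 2 *\<^sub>R (chi B y *\<^sub>R f y) + f y" if y: "y \<in> bd h B" for y
  proof -
    have yl: "y \<in> lattice h" using y unfolding bd_def by blast
    have "surf_int h B (star h B y (\<lambda>x. f x - f y)) = Cop h B f y - surf_int h B (star h B y (\<lambda>_. f y))"
      unfolding Cop_def star_diff by (rule surf_int_diff)
    also have "surf_int h B (star h B y (\<lambda>_. f y)) = chi B y *\<^sub>R f y"
      by (rule key_K[OF assms yl])
    finally show ?thesis unfolding Sop_def by (simp add: scaleR_diff_right)
  qed
  show ?thesis
  proof (intro conjI ballI)
    fix y assume y: "y \<in> bd h B \<inter> B"
    then show "Cop h B f y = (1/2) *\<^sub>R (f y + Sop h B f y)"
      using S[of y] by (simp add: chi_def scaleR_add_right scaleR_diff_right)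
  next
    fix y assume y: "y \<in> bd h B - B"
    then show "Cop h B f y = (1/2) *\<^sub>R (- f y + Sop h B f y)"
      using S[of y] by (simp add: chi_def scaleR_add_right scaleR_diff_right)
  qed
qed


end
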